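(* Let $m \ge 2$ and $n \ge 2m-1$ be integers. Then for every real $r$ with $|r|<1$, $$\int_{-1}^1 \frac{U_n(s)(1-s^2)^{m-\frac{1}{2}}}{(s-r)^2}\,ds = \pi(-1)^{m}\left(\frac{1}{2}\right)^{2m-2}\sum_{j=0}^{2m-2}(-1)^j\binom{2m-2}{j}(n+3-2m+2j)\,U_{n+2-2m+2j}(r),$$ where the integral is a Hadamard finite-part integral.
   Context: $U_k(s)=\frac{\sin((k+1)\cos^{-1}s)}{\sin(\cos^{-1}s)}$ is the Tchebyshev polynomial of the second kind. For a positive integer $\alpha\ge 2$ and $|r|<1$, the integral $\int_{-1}^1 \frac{D(s)}{(s-r)^\alpha}ds$ is understood in the Hadamard finite-part sense; in particular it satisfies $\int_{-1}^1 \frac{D(s)}{(s-r)^{\alpha}}ds=\frac{1}{\alpha-1}\frac{d}{dr}\int_{-1}^1\frac{D(s)}{(s-r)^{\alpha-1}}ds$, where for $\alpha-1=1$ the right-hand integral is a Cauchy principal value. $\binom{a}{j}=\frac{a!}{j!(a-j)!}$. *)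

theory Defs
  imports "HOL-Analysis.Analysis"
begin

definition chebU :: "nat \<Rightarrow> real \<Rightarrow> real" where
  "chebU k s = sin ((real k + 1) * arccos s) / sin (arccos s)"

definition cpv :: "(real \<Rightarrow> real) \<Rightarrow> real \<Rightarrow> real" where
  "cpv D r = Lim (at_right 0)
     (\<lambda>\<epsilon>. integral {-1..r-\<epsilon>} (\<lambda>s. D s / (s - r)) + integral {r+\<epsilon>..1} (\<lambda>s. D s / (s - r)))"

text \<open>Hadamard finite-part integral of D(s)/(s-r)^2 over [-1,1], via
  fp_2 = (1/(2-1)) d/dr cpv.\<close>
definition hadamard2 :: "(real \<Rightarrow> real) \<Rightarrow> real \<Rightarrow> real" where
  "hadamard2 D r = deriv (cpv D) r"

end

theory Submission
  imports Defs
begin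


definition PVL :: "(real \<Rightarrow> real) \<Rightarrow> real \<Rightarrow> real \<Rightarrow> bool" where
 "PVL f r L \<longleftrightarrow> (\<forall>\<^sub>F e in at_right 0. (\<lambda>s. f s / (s - r)) integrable_on {-1..r-e} \<and> (\<lambda>s. f s / (s - r)) integrable_on {r+e..1})
   \<and> ((\<lambda>e. integral {-1..r-e} (\<lambda>s. f s / (s - r)) + integral {r+e..1} (\<lambda>s. f s / (s - r))) \<longlongrightarrow> L) (at_right 0)"

lemma PVL_cpv: "PVL f r L \<Longrightarrow> cpv f r = L"
  unfolding PVL_def cpv_def by (auto intro!: tendsto_Lim)

lemma PVL_zero: "PVL (\<lambda>s. 0) r 0"
  unfolding PVL_def by (simp add: integrable_0)

lemma PVL_add:
  assumes "PVL f r L1" "PVL g r L2"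
  shows "PVL (\<lambda>s. f s + g s) r (L1 + L2)"
proof -
  have eq: "(\<lambda>s. (f s + g s)/(s-r)) = (\<lambda>s. f s/(s-r) + g s/(s-r))" by (auto simp: add_divide_distrib)
  from assms have ev1: "\<forall>\<^sub>F e in at_right 0. (\<lambda>s. f s / (s - r)) integrable_on {-1..r-e} \<and> (\<lambda>s. f s / (s - r)) integrable_on {r+e..1}"
    and ev2: "\<forall>\<^sub>F e in at_right 0. (\<lambda>s. g s / (s - r)) integrable_on {-1..r-e} \<and> (\<lambda>s. g s / (s - r)) integrable_on {r+e..1}"
    and t1: "((\<lambda>e. integral {-1..r-e} (\<lambda>s. f s / (s - r)) + integral {r+e..1} (\<lambda>s. f s / (s - r))) \<longlongrightarrow> L1) (at_right 0)"
    and t2: "((\<lambda>e. integral {-1..r-e} (\<lambda>s. g s / (s - r)) + integral {r+e..1} (\<lambda>s. g s / (s - r))) \<longlongrightarrow> L2) (at_right 0)"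
    unfolding PVL_def by auto
  have ev: "\<forall>\<^sub>F e in at_right 0. (\<lambda>s. f s / (s - r)) integrable_on {-1..r-e} \<and> (\<lambda>s. f s / (s - r)) integrable_on {r+e..1}
     \<and> (\<lambda>s. g s / (s - r)) integrable_on {-1..r-e} \<and> (\<lambda>s. g s / (s - r)) integrable_on {r+e..1}"
    using eventually_conj[OF ev1 ev2] by auto
  show ?thesis unfolding PVL_def eq
  proof
    show "\<forall>\<^sub>F e in at_right 0. (\<lambda>s. f s / (s - r) + g s / (s - r)) integrable_on {- 1..r - e} \<and>
        (\<lambda>s. f s / (s - r) + g s / (s - r)) integrable_on {r + e..1}"
      by (rule eventually_mono[OF ev]) (auto intro: integrable_add)
    show "((\<lambda>e. integral {- 1..r - e} (\<lambda>s. f s / (s - r) + g s / (s - r)) +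
          integral {r + e..1} (\<lambda>s. f s / (s - r) + g s / (s - r))) \<longlongrightarrow> L1 + L2) (at_right 0)"
    proof (rule Lim_transform_eventually[OF tendsto_add[OF t1 t2]])
      show "\<forall>\<^sub>F x in at_right 0. integral {- 1..r - x} (\<lambda>s. f s / (s - r)) + integral {r + x..1} (\<lambda>s. f s / (s - r)) +
         (integral {- 1..r - x} (\<lambda>s. g s / (s - r)) + integral {r + x..1} (\<lambda>s. g s / (s - r))) =
         integral {- 1..r - x} (\<lambda>s. f s / (s - r) + g s / (s - r)) + integral {r + x..1} (\<lambda>s. f s / (s - r) + g s / (s - r))"
        by (rule eventually_mono[OF ev]) (simp add: integral_add)
    qed
  qed
qed

lemma int_cmult: "f integrable_on S \<Longrightarrow> (\<lambda>x. (c::real) * f x) integrable_on S"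
  using integrable_on_cmult_left[of f S c] by simp

lemma PVL_cmult:
  assumes "PVL f r L"
  shows "PVL (\<lambda>s. c * f s) r (c * L)"
proof -
  have eq: "(\<lambda>s. (c * f s)/(s-r)) = (\<lambda>s. c * (f s/(s-r)))" by auto
  from assms have ev1: "\<forall>\<^sub>F e in at_right 0. (\<lambda>s. f s / (s - r)) integrable_on {-1..r-e} \<and> (\<lambda>s. f s / (s - r)) integrable_on {r+e..1}"
    and t1: "((\<lambda>e. integral {-1..r-e} (\<lambda>s. f s / (s - r)) + integral {r+e..1} (\<lambda>s. f s / (s - r))) \<longlongrightarrow> L) (at_right 0)"
    unfolding PVL_def by auto
  show ?thesis unfolding PVL_def eq
  proof
    show "\<forall>\<^sub>F e in at_right 0. (\<lambda>s. c * (f s / (s - r))) integrable_on {- 1..r - e} \<and>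
        (\<lambda>s. c * (f s / (s - r))) integrable_on {r + e..1}"
      by (rule eventually_mono[OF ev1]) (use int_cmult[of "\<lambda>s. f s / (s - r)"] in blast)
    have "((\<lambda>e. c * (integral {-1..r-e} (\<lambda>s. f s / (s - r)) + integral {r+e..1} (\<lambda>s. f s / (s - r)))) \<longlongrightarrow> c * L) (at_right 0)"
      by (rule tendsto_mult_left[OF t1])
    then show "((\<lambda>e. integral {- 1..r - e} (\<lambda>s. c * (f s / (s - r))) +
          integral {r + e..1} (\<lambda>s. c * (f s / (s - r)))) \<longlongrightarrow> c * L) (at_right 0)"
      unfolding integral_mult_right distrib_left .
  qed
qed

lemma PVL_sum:
  assumes "finite S" "\<And>j. j \<in> S \<Longrightarrow> PVL (f j) r (L j)"
  shows "PVL (\<lambda>s. \<Sum>j\<in>S. f j s) r (\<Sum>j\<in>S. L j)"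
  using assms
proof (induction S rule: finite_induct)
  case empty
  then show ?case using PVL_zero by simp
next
  case (insert x F)
  then show ?case using PVL_add[of "f x" r "L x" "\<lambda>s. \<Sum>j\<in>F. f j s" "\<Sum>j\<in>F. L j"] by simp
qed

lemma PVL_cong:
  assumes "\<And>s. s \<in> {-1..1} \<Longrightarrow> f s = g s" "\<bar>r\<bar> < 1" "PVL f r L"
  shows "PVL g r L"
proof -
  have ev: "\<forall>\<^sub>F e in at_right 0. (0::real) < e" by (rule eventually_at_right_less)
  have *: "\<And>e s. 0 < e \<Longrightarrow> s \<in> {-1..r-e} \<union> {r+e..1} \<Longrightarrow> f s / (s - r) = g s / (s - r)"
    using assms(1,2) by auto
  have "\<forall>\<^sub>F e in at_right 0. ((\<lambda>s. f s / (s - r)) integrable_on {-1..r-e} \<longleftrightarrow> (\<lambda>s. g s / (s - r)) integrable_on {-1..r-e})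
      \<and> ((\<lambda>s. f s / (s - r)) integrable_on {r+e..1} \<longleftrightarrow> (\<lambda>s. g s / (s - r)) integrable_on {r+e..1})
      \<and> integral {-1..r-e} (\<lambda>s. f s / (s - r)) + integral {r+e..1} (\<lambda>s. f s / (s - r)) =
        integral {-1..r-e} (\<lambda>s. g s / (s - r)) + integral {r+e..1} (\<lambda>s. g s / (s - r))"
  proof (rule eventually_mono[OF ev], intro conjI)
    fix e :: real assume "0 < e"
    have a: "\<And>s. s \<in> {-1..r-e} \<Longrightarrow> f s / (s - r) = g s / (s - r)" using assms(1,2) \<open>0<e\<close> by auto
    have b: "\<And>s. s \<in> {r+e..1} \<Longrightarrow> f s / (s - r) = g s / (s - r)" using assms(1,2) \<open>0<e\<close> by auto
    show "((\<lambda>s. f s / (s - r)) integrable_on {-1..r-e}) = ((\<lambda>s. g s / (s - r)) integrable_on {-1..r-e})"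
      by (rule integrable_cong[OF a])
    show "((\<lambda>s. f s / (s - r)) integrable_on {r+e..1}) = ((\<lambda>s. g s / (s - r)) integrable_on {r+e..1})"
      by (rule integrable_cong[OF b])
    show "integral {-1..r-e} (\<lambda>s. f s / (s - r)) + integral {r+e..1} (\<lambda>s. f s / (s - r)) =
        integral {-1..r-e} (\<lambda>s. g s / (s - r)) + integral {r+e..1} (\<lambda>s. g s / (s - r))"
      using integral_cong[of "{-1..r-e}" "\<lambda>s. f s/(s-r)" "\<lambda>s. g s/(s-r)"] integral_cong[of "{r+e..1}" "\<lambda>s. f s/(s-r)" "\<lambda>s. g s/(s-r)"] a b by simp
  qed
  with assms(3) show ?thesis unfolding PVL_def
    by (auto elim: Lim_transform_eventually eventually_elim2)
qed



lemma tendsto_r_minus: "((\<lambda>e. r - e) \<longlongrightarrow> (r::real)) (at_right 0)"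
proof -
  have "((\<lambda>e. r - e) \<longlongrightarrow> r - 0) (at_right (0::real))"
    by (intro tendsto_intros)
  then show ?thesis by simp
qed

lemma tendsto_r_plus: "((\<lambda>e. r + e) \<longlongrightarrow> (r::real)) (at_right 0)"
proof -
  have "((\<lambda>e. r + e) \<longlongrightarrow> r + 0) (at_right (0::real))"
    by (intro tendsto_intros)
  then show ?thesis by simp
qed

lemma PVL_cont:
  assumes g: "continuous_on {-1..1} g" and r: "\<bar>r\<bar> < 1"
  shows "PVL (\<lambda>s. (s - r) * g s) r (integral {-1..1} g)"
proof -
  have ev: "\<forall>\<^sub>F e in at_right 0. (0::real) < e" by (rule eventually_at_right_less)
  have gi: "g integrable_on {-1..1}" using g by (rule integrable_continuous_real)
  have a: "\<And>e s. 0 < e \<Longrightarrow> s \<in> {-1..r-e} \<Longrightarrow> (s - r) * g s / (s - r) = g s" by auto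
  have b: "\<And>e s. 0 < e \<Longrightarrow> s \<in> {r+e..1} \<Longrightarrow> (s - r) * g s / (s - r) = g s" by auto
  have sub1: "\<And>e. 0 < e \<Longrightarrow> {-1..r-e} \<subseteq> {-1..1}" using r by auto
  have sub2: "\<And>e. 0 < e \<Longrightarrow> {r+e..1} \<subseteq> {-1..1}" using r by auto
  have ev2: "\<forall>\<^sub>F e in at_right 0. ((\<lambda>s. (s - r) * g s / (s - r)) integrable_on {-1..r-e} \<and> (\<lambda>s. (s - r) * g s / (s - r)) integrable_on {r+e..1})
     \<and> integral {-1..r-e} (\<lambda>s. (s - r) * g s / (s - r)) + integral {r+e..1} (\<lambda>s. (s - r) * g s / (s - r))
       = integral {-1..r-e} g + integral {r+e..1} g"
  proof (rule eventually_mono[OF ev])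
    fix e :: real assume e: "0 < e"
    have i1: "g integrable_on {-1..r-e}" by (rule integrable_on_subinterval[OF gi sub1[OF e]])
    have i2: "g integrable_on {r+e..1}" by (rule integrable_on_subinterval[OF gi sub2[OF e]])
    show "((\<lambda>s. (s - r) * g s / (s - r)) integrable_on {-1..r-e} \<and> (\<lambda>s. (s - r) * g s / (s - r)) integrable_on {r+e..1})
     \<and> integral {-1..r-e} (\<lambda>s. (s - r) * g s / (s - r)) + integral {r+e..1} (\<lambda>s. (s - r) * g s / (s - r))
       = integral {-1..r-e} g + integral {r+e..1} g"
      using integrable_cong[of "{-1..r-e}" "\<lambda>s. (s - r) * g s / (s - r)" g] 
        integrable_cong[of "{r+e..1}" "\<lambda>s. (s - r) * g s / (s - r)" g]
        integral_cong[of "{-1..r-e}" "\<lambda>s. (s - r) * g s / (s - r)" g] 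
        integral_cong[of "{r+e..1}" "\<lambda>s. (s - r) * g s / (s - r)" g] a[OF e] b[OF e] i1 i2
      by auto
  qed
  have c1: "continuous_on {-1..1} (\<lambda>x. integral {-1..x} g)" by (rule indefinite_integral_continuous_1[OF gi])
  have c2: "continuous_on {-1..1} (\<lambda>x. integral {x..1} g)" by (rule indefinite_integral_continuous_1'[OF gi])
  have rin: "r \<in> interior {-1..1}" using r by auto
  have t1: "((\<lambda>e. integral {-1..r-e} g) \<longlongrightarrow> integral {-1..r} g) (at_right 0)"
    using isCont_tendsto_compose[OF continuous_on_interior[OF c1 rin] tendsto_r_minus] .
  have t2: "((\<lambda>e. integral {r+e..1} g) \<longlongrightarrow> integral {r..1} g) (at_right 0)"
    using isCont_tendsto_compose[OF continuous_on_interior[OF c2 rin] tendsto_r_plus] .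
  have "integral {-1..r} g + integral {r..1} g = integral {-1..1} g"
    by (rule Henstock_Kurzweil_Integration.integral_combine) (use r gi in auto)
  then have t: "((\<lambda>e. integral {-1..r-e} g + integral {r+e..1} g) \<longlongrightarrow> integral {-1..1} g) (at_right 0)"
    using tendsto_add[OF t1 t2] by simp
  show ?thesis unfolding PVL_def
  proof
    show "\<forall>\<^sub>F e in at_right 0. (\<lambda>s. (s - r) * g s / (s - r)) integrable_on {- 1..r - e} \<and>
        (\<lambda>s. (s - r) * g s / (s - r)) integrable_on {r + e..1}"
      using ev2 by (rule eventually_mono) blast
    show "((\<lambda>e. integral {- 1..r - e} (\<lambda>s. (s - r) * g s / (s - r)) +
          integral {r + e..1} (\<lambda>s. (s - r) * g s / (s - r))) \<longlongrightarrow> integral {- 1..1} g) (at_right 0)"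
      by (rule Lim_transform_eventually[OF t]) (rule eventually_mono[OF ev2], simp)
  qed
qed

lemma PVL_antideriv:
  assumes r: "\<bar>r\<bar> < 1" and A: "continuous_on {-1..1} A"
    and d: "\<And>s. -1 < s \<Longrightarrow> s < 1 \<Longrightarrow> s \<noteq> r \<Longrightarrow>
       ((\<lambda>s. A s + c * ln \<bar>s - r\<bar>) has_real_derivative f s / (s - r)) (at s)"
  shows "PVL f r (A 1 - A (-1) + c * ln ((1 - r) / (1 + r)))"
proof -
  define F where "F = (\<lambda>s. A s + c * ln \<bar>s - r\<bar>)"
  have ev: "\<forall>\<^sub>F e in at_right 0. (0::real) < e \<and> e < 1 - \<bar>r\<bar>"
    using r by (auto simp: eventually_at_right_field intro!: exI[of _ "1 - \<bar>r\<bar>"])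
  have ev2: "\<forall>\<^sub>F e in at_right 0. ((\<lambda>s. f s / (s - r)) has_integral F (r-e) - F (-1)) {-1..r-e}
     \<and> ((\<lambda>s. f s / (s - r)) has_integral F 1 - F (r+e)) {r+e..1}"
  proof (rule eventually_mono[OF ev])
    fix e :: real assume e: "0 < e \<and> e < 1 - \<bar>r\<bar>"
    show "((\<lambda>s. f s / (s - r)) has_integral F (r-e) - F (-1)) {-1..r-e}
     \<and> ((\<lambda>s. f s / (s - r)) has_integral F 1 - F (r+e)) {r+e..1}"
    proof
      show "((\<lambda>s. f s / (s - r)) has_integral F (r-e) - F (-1)) {-1..r-e}"
      proof (rule fundamental_theorem_of_calculus_interior)
        show "-1 \<le> r - e" using e r by auto
        have "continuous_on {-1..r-e} A" by (rule continuous_on_subset[OF A]) (use e r in auto)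
        moreover have "continuous_on {-1..r-e} (\<lambda>s. ln \<bar>s - r\<bar>)"
          using e by (intro continuous_intros) auto
        ultimately show "continuous_on {-1..r-e} F" unfolding F_def by (intro continuous_on_add continuous_on_mult continuous_on_const)
        fix s assume "s \<in> {-1<..<r-e}"
        then show "(F has_vector_derivative f s / (s - r)) (at s)"
          unfolding F_def has_real_derivative_iff_has_vector_derivative[symmetric]
          using e r by (intro d) auto
      qed
      show "((\<lambda>s. f s / (s - r)) has_integral F 1 - F (r+e)) {r+e..1}"
      proof (rule fundamental_theorem_of_calculus_interior)
        show "r + e \<le> 1" using e r by auto
        have "continuous_on {r+e..1} A" by (rule continuous_on_subset[OF A]) (use e r in auto)
        moreover have "continuous_on {r+e..1} (\<lambda>s. ln \<bar>s - r\<bar>)"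
          using e by (intro continuous_intros) auto
        ultimately show "continuous_on {r+e..1} F" unfolding F_def by (intro continuous_on_add continuous_on_mult continuous_on_const)
        fix s assume "s \<in> {r+e<..<1}"
        then show "(F has_vector_derivative f s / (s - r)) (at s)"
          unfolding F_def has_real_derivative_iff_has_vector_derivative[symmetric]
          using e r by (intro d) auto
      qed
    qed
  qed
  have eq: "\<And>e. 0 < e \<Longrightarrow> F (r-e) - F (-1) + (F 1 - F (r+e)) =
     A (r-e) - A (r+e) + (A 1 - A (-1) + c * ln ((1 - r) / (1 + r)))"
  proof -
    fix e :: real assume e: "0 < e"
    have L: "ln ((1 - r) / (1 + r)) = ln (1 - r) - ln (1 + r)" using r by (subst ln_div) auto
    have "\<bar>-1 - r\<bar> = 1 + r" "\<bar>1 - r\<bar> = 1 - r" "\<bar>r - e - r\<bar> = e" "\<bar>r + e - r\<bar> = e"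
      using r e by auto
    then show "F (r-e) - F (-1) + (F 1 - F (r+e)) =
     A (r-e) - A (r+e) + (A 1 - A (-1) + c * ln ((1 - r) / (1 + r)))"
      unfolding F_def L by (simp add: algebra_simps)
  qed
  have rin: "r \<in> interior {-1..1}" using r by auto
  have cA: "isCont A r" by (rule continuous_on_interior[OF A rin])
  have t: "((\<lambda>e. A (r-e) - A (r+e) + (A 1 - A (-1) + c * ln ((1 - r) / (1 + r))))
      \<longlongrightarrow> A r - A r + (A 1 - A (-1) + c * ln ((1 - r) / (1 + r)))) (at_right 0)"
    by (intro tendsto_intros isCont_tendsto_compose[OF cA tendsto_r_minus] isCont_tendsto_compose[OF cA tendsto_r_plus])
  show ?thesis unfolding PVL_def
  proof
    show "\<forall>\<^sub>F e in at_right 0. (\<lambda>s. f s / (s - r)) integrable_on {- 1..r - e} \<and>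
        (\<lambda>s. f s / (s - r)) integrable_on {r + e..1}"
      using ev2 by (rule eventually_mono) (auto simp: integrable_on_def)
    show "((\<lambda>e. integral {- 1..r - e} (\<lambda>s. f s / (s - r)) + integral {r + e..1} (\<lambda>s. f s / (s - r)))
        \<longlongrightarrow> A 1 - A (- 1) + c * ln ((1 - r) / (1 + r))) (at_right 0)"
    proof (rule Lim_transform_eventually)
      show "((\<lambda>e. A (r-e) - A (r+e) + (A 1 - A (-1) + c * ln ((1 - r) / (1 + r))))
      \<longlongrightarrow> A 1 - A (- 1) + c * ln ((1 - r) / (1 + r))) (at_right 0)" using t by simp
      show "\<forall>\<^sub>F e in at_right 0. A (r - e) - A (r + e) + (A 1 - A (- 1) + c * ln ((1 - r) / (1 + r))) =
         integral {- 1..r - e} (\<lambda>s. f s / (s - r)) + integral {r + e..1} (\<lambda>s. f s / (s - r))"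
        using eventually_conj[OF ev ev2] by (rule eventually_mono) (auto simp: integral_unique eq)
    qed
  qed
qed



lemma DERIV_ln_abs_shift:
  assumes "s \<noteq> (r::real)"
  shows "((\<lambda>x. ln \<bar>x - r\<bar>) has_real_derivative 1 / (s - r)) (at s)"
proof (cases "s > r")
  case True
  have "((\<lambda>x. ln (x - r)) has_real_derivative 1 / (s - r)) (at s)"
    using True by (auto intro!: derivative_eq_intros simp: field_simps)
  then show ?thesis
    by (rule has_field_derivative_transform_within_open[where S="{r<..}"]) (use True in auto)
next
  case False
  then have F: "s < r" using assms by auto
  have "((\<lambda>x. ln (r - x)) has_real_derivative 1 / (s - r)) (at s)"
    using F by (auto intro!: derivative_eq_intros simp: field_simps)
  then show ?thesis
    by (rule has_field_derivative_transform_within_open[where S="{..<r}"]) (use F in auto)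
qed

lemma DERIV_w:
  assumes "-1 < s" "s < (1::real)"
  shows "((\<lambda>x. sqrt (1 - x\<^sup>2)) has_real_derivative - s / sqrt (1 - s\<^sup>2)) (at s)"
proof -
  have p: "0 < 1 - s\<^sup>2" using assms by (simp add: abs_square_less_1 abs_less_iff)
  have d1: "((\<lambda>x. 1 - x\<^sup>2) has_real_derivative - (2 * s)) (at s)"
    by (auto intro!: derivative_eq_intros)
  have "((\<lambda>x. sqrt (1 - x\<^sup>2)) has_real_derivative inverse (sqrt (1 - s\<^sup>2)) / 2 * (- (2 * s))) (at s)"
    by (rule DERIV_chain2[OF DERIV_real_sqrt[OF p] d1])
  then show ?thesis by (simp add: field_simps)
qed



lemma PVL_sin1:
  assumes r: "\<bar>r\<bar> < 1"
  shows "PVL (\<lambda>s. sin (arccos s)) r (- pi * r)"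
proof -
  define \<rho> where "\<rho> = sqrt (1 - r\<^sup>2)"
  have r2: "r\<^sup>2 < 1" using r by (simp add: abs_square_less_1)
  have \<rho>pos: "0 < \<rho>" unfolding \<rho>_def using r2 by simp
  have \<rho>2: "\<rho>\<^sup>2 = 1 - r\<^sup>2" unfolding \<rho>_def using r2 by simp
  define N where "N = (\<lambda>s. 1 - r * s + \<rho> * sqrt (1 - s\<^sup>2))"
  define A where "A = (\<lambda>s. - \<rho> * ln (N s) + sqrt (1 - s\<^sup>2) + r * arccos s)"
  have Npos: "0 < N s" if "s \<in> {-1..1}" for s
  proof -
    have "\<bar>s\<bar> \<le> 1" using that by auto
    then have "\<bar>r\<bar> * \<bar>s\<bar> \<le> \<bar>r\<bar> * 1" by (intro mult_left_mono) auto
    then have "\<bar>r * s\<bar> < 1" using r by (simp add: abs_mult)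
    then have "0 < 1 - r * s" by auto
    moreover have "0 \<le> \<rho> * sqrt (1 - s\<^sup>2)" using \<rho>pos \<open>\<bar>s\<bar> \<le> 1\<close> by (intro mult_nonneg_nonneg) (auto simp: abs_square_le_1)
    ultimately show ?thesis unfolding N_def by linarith
  qed
  have cA: "continuous_on {-1..1} A"
    unfolding A_def N_def using Npos[unfolded N_def]
    by (intro continuous_intros) (auto, force)
  have d: "((\<lambda>s. A s + \<rho> * ln \<bar>s - r\<bar>) has_real_derivative sqrt (1 - s\<^sup>2) / (s - r)) (at s)"
    if s: "-1 < s" "s < 1" "s \<noteq> r" for s
  proof -
    define w where "w = sqrt (1 - s\<^sup>2)"
    have s2: "s\<^sup>2 < 1" using s by (simp add: abs_square_less_1 abs_less_iff)
    have wpos: "0 < w" unfolding w_def using s2 by simp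
    have w2: "w\<^sup>2 = 1 - s\<^sup>2" unfolding w_def using s2 by simp
    have Ns: "0 < N s" using Npos s by auto
    have dw: "((\<lambda>x. sqrt (1 - x\<^sup>2)) has_real_derivative - s / w) (at s)"
      unfolding w_def by (rule DERIV_w[OF s(1,2)])
    have d0: "((\<lambda>z. 1 - r * z) has_real_derivative - r) (at s)" by (auto intro!: derivative_eq_intros)
    have dN: "(N has_real_derivative - r + \<rho> * (- s / w)) (at s)"
      unfolding N_def by (rule DERIV_add[OF d0 DERIV_cmult[OF dw]])
    have dl: "((\<lambda>x. ln (N x)) has_real_derivative inverse (N s) * (- r + \<rho> * (- s / w))) (at s)"
      by (rule DERIV_chain2[OF DERIV_ln[OF Ns] dN])
    have dac: "((\<lambda>x. r * arccos x) has_real_derivative r * inverse (- w)) (at s)"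
      unfolding w_def by (rule DERIV_cmult[OF DERIV_arccos[OF s(1,2)]])
    have dA: "(A has_real_derivative - \<rho> * (inverse (N s) * (- r + \<rho> * (- s / w))) + (- s / w) + r * inverse (- w)) (at s)"
      unfolding A_def
      by (rule DERIV_add[OF DERIV_add[OF DERIV_cmult[OF dl] dw] dac])
    have dT: "((\<lambda>s. A s + \<rho> * ln \<bar>s - r\<bar>) has_real_derivative
        (- \<rho> * (inverse (N s) * (- r + \<rho> * (- s / w))) + (- s / w) + r * inverse (- w)) + \<rho> * (1 / (s - r))) (at s)"
      by (rule DERIV_add[OF dA DERIV_cmult[OF DERIV_ln_abs_shift[OF s(3)]]])
    have eq: "(- \<rho> * (inverse (N s) * (- r + \<rho> * (- s / w))) + (- s / w) + r * inverse (- w)) + \<rho> * (1 / (s - r))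
       = w / (s - r)"
    proof -
      have sr: "s - r \<noteq> 0" using s by auto
      have NN: "N s = 1 - r * s + \<rho> * w" unfolding N_def w_def ..
      have "\<rho> * (r * w + \<rho> * s) * (s - r) - (s + r) * (s - r) * N s + \<rho> * w * N s = w\<^sup>2 * N s"
        unfolding NN using w2 \<rho>2 by algebra
      moreover have "(- \<rho> * (inverse (N s) * (- r + \<rho> * (- s / w))) + (- s / w) + r * inverse (- w)) + \<rho> * (1 / (s - r))
        = (\<rho> * (r * w + \<rho> * s) * (s - r) - (s + r) * (s - r) * N s + \<rho> * w * N s) / (w * N s * (s - r))"
        using sr wpos Ns by (simp add: field_simps)
      moreover have "w / (s - r) = w\<^sup>2 * N s / (w * N s * (s - r))"
        using sr wpos Ns by (simp add: field_simps power2_eq_square)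
      ultimately show ?thesis by simp
    qed
    show ?thesis using dT[unfolded eq] unfolding w_def .
  qed
  have P: "PVL (\<lambda>s. sqrt (1 - s\<^sup>2)) r (A 1 - A (-1) + \<rho> * ln ((1 - r) / (1 + r)))"
    by (rule PVL_antideriv[OF r cA d])
  have "A 1 - A (-1) + \<rho> * ln ((1 - r) / (1 + r)) = - pi * r"
  proof -
    have L: "ln ((1 - r) / (1 + r)) = ln (1 - r) - ln (1 + r)" using r by (subst ln_div) auto
    show ?thesis unfolding A_def N_def L by (simp add: algebra_simps)
  qed
  with P have P2: "PVL (\<lambda>s. sqrt (1 - s\<^sup>2)) r (- pi * r)" by simp
  have cong: "\<And>s. s \<in> {-1..1} \<Longrightarrow> sqrt (1 - s\<^sup>2) = sin (arccos s)"
    by (subst sin_arccos_abs) auto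
  show ?thesis by (rule PVL_cong[OF cong r P2])
qed



lemma DERIV_comp_arccos:
  assumes G: "\<And>t. (G has_real_derivative G' t) (at t)" and s: "-1 < s" "s < (1::real)"
  shows "((\<lambda>x. - G (arccos x)) has_real_derivative G' (arccos s) / sqrt (1 - s\<^sup>2)) (at s)"
proof -
  have "((\<lambda>x. G (arccos x)) has_real_derivative G' (arccos s) * inverse (- sqrt (1 - s\<^sup>2))) (at s)"
    by (rule DERIV_chain2[OF G DERIV_arccos[OF s]])
  from DERIV_minus[OF this] show ?thesis by (simp add: field_simps)
qed

lemma sin_prod_cos: "2 * (sin ((k + 1) * t) * sin t) = cos (k * t) - cos ((k + 2) * (t::real))"
proof -
  have a: "cos (k * t) = cos ((k + 1) * t - t)" by (simp add: algebra_simps)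
  have b: "cos ((k + 2) * t) = cos ((k + 1) * t + t)" by (simp add: algebra_simps)
  show ?thesis unfolding a b cos_add cos_diff by simp
qed

lemma int_sin_arccos:
  "((\<lambda>s. sin ((real k + 1) * arccos s)) has_integral (if k = 0 then pi / 2 else 0)) {-1..1}"
proof -
  define g where "g = (\<lambda>t::real. if k = 0 then t else sin (real k * t) / real k)"
  define G where "G = (\<lambda>t. g t / 2 - sin ((real k + 2) * t) / (2 * (real k + 2)))"
  have dg: "(g has_real_derivative cos (real k * t)) (at t)" for t
  proof (cases "k = 0")
    case True
    then show ?thesis unfolding g_def by (auto intro!: derivative_eq_intros)
  next
    case False
    then show ?thesis unfolding g_def by (auto intro!: derivative_eq_intros)
  qed
  have dG: "(G has_real_derivative sin ((real k + 1) * t) * sin t) (at t)" for t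
  proof -
    have "(G has_real_derivative cos (real k * t) / 2 - cos ((real k + 2) * t) * (real k + 2) / (2 * (real k + 2))) (at t)"
      unfolding G_def by (auto intro!: derivative_eq_intros dg)
    moreover have "cos (real k * t) / 2 - cos ((real k + 2) * t) * (real k + 2) / (2 * (real k + 2)) = sin ((real k + 1) * t) * sin t"
    proof -
      have e1: "cos ((real k + 2) * t) * (real k + 2) / (2 * (real k + 2)) = cos ((real k + 2) * t) / 2"
        by (simp add: field_simps)
      show ?thesis unfolding e1 using sin_prod_cos[of "real k" t] by linarith
    qed
    ultimately show ?thesis by simp
  qed
  have "((\<lambda>s. sin ((real k + 1) * arccos s)) has_integral ((- G (arccos 1)) - (- G (arccos (-1))))) {-1..1}"
  proof (rule fundamental_theorem_of_calculus_interior)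
    show "-1 \<le> (1::real)" by simp
    have cG: "continuous_on UNIV G" by (intro continuous_at_imp_continuous_on ballI DERIV_isCont[OF dG])
    have "continuous_on {-1..1} (\<lambda>x. G (arccos x))"
      by (rule continuous_on_compose2[OF cG continuous_on_arccos']) auto
    then show "continuous_on {-1..1} (\<lambda>x. - G (arccos x))"
      by (rule continuous_on_minus)
    fix s :: real assume "s \<in> {-1<..<1}"
    then have s: "-1 < s" "s < 1" by auto
    have "((\<lambda>x. - G (arccos x)) has_real_derivative sin ((real k + 1) * arccos s) * sin (arccos s) / sqrt (1 - s\<^sup>2)) (at s)"
      by (rule DERIV_comp_arccos[OF dG s])
    moreover have "sin (arccos s) = sqrt (1 - s\<^sup>2)" using s by (simp add: sin_arccos_abs)
    moreover have "sqrt (1 - s\<^sup>2) > 0" using s by (simp add: abs_square_less_1 abs_less_iff)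
    ultimately show "((\<lambda>x. - G (arccos x)) has_vector_derivative sin ((real k + 1) * arccos s)) (at s)"
      unfolding has_real_derivative_iff_has_vector_derivative[symmetric] by simp
  qed
  moreover have "(- G (arccos 1)) - (- G (arccos (-1))) = (if k = 0 then pi / 2 else 0)"
  proof -
    have "sin ((real k + 2) * pi) = 0"
      using sin_npi[of "k + 2"] by (simp add: add.commute)
    moreover have "sin (real k * pi) = 0" by simp
    ultimately show ?thesis unfolding G_def g_def by simp
  qed
  ultimately show ?thesis by simp
qed



lemma sin_rec: "sin ((k + 2) * t) = 2 * cos t * sin ((k + 1) * t) - sin (k * (t::real))"
proof -
  have a: "k * t = (k + 1) * t - t" by (simp add: algebra_simps)
  have b: "(k + 2) * t = (k + 1) * t + t" by (simp add: algebra_simps)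
  show ?thesis unfolding a b sin_add sin_diff by (simp add: algebra_simps)
qed

lemma cos_rec: "cos ((k + 2) * t) = 2 * cos t * cos ((k + 1) * t) - cos (k * (t::real))"
proof -
  have a: "k * t = (k + 1) * t - t" by (simp add: algebra_simps)
  have b: "(k + 2) * t = (k + 1) * t + t" by (simp add: algebra_simps)
  show ?thesis unfolding a b cos_add cos_diff by (simp add: algebra_simps)
qed

lemma PVL_step:
  assumes r: "\<bar>r\<bar> < 1"
    and P0: "PVL (\<lambda>s. sin (real k * arccos s)) r L0"
    and P1: "PVL (\<lambda>s. sin ((real k + 1) * arccos s)) r L1"
  shows "PVL (\<lambda>s. sin ((real k + 2) * arccos s)) r (2 * (if k = 0 then pi / 2 else 0) + 2 * r * L1 - L0)"
proof -
  have cg: "continuous_on {-1..1} (\<lambda>s. 2 * sin ((real k + 1) * arccos s))"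
    by (intro continuous_intros) auto
  have I: "integral {-1..1} (\<lambda>s. 2 * sin ((real k + 1) * arccos s)) = 2 * (if k = 0 then pi / 2 else 0)"
    using integral_unique[OF int_sin_arccos[of k]] by simp
  have Q1: "PVL (\<lambda>s. (s - r) * (2 * sin ((real k + 1) * arccos s))) r (2 * (if k = 0 then pi / 2 else 0))"
    using PVL_cont[OF cg r] unfolding I .
  have Q2: "PVL (\<lambda>s. (2 * r) * sin ((real k + 1) * arccos s)) r (2 * r * L1)"
    by (rule PVL_cmult[OF P1])
  have Q3: "PVL (\<lambda>s. (-1) * sin (real k * arccos s)) r ((-1) * L0)"
    by (rule PVL_cmult[OF P0])
  have Q: "PVL (\<lambda>s. (s - r) * (2 * sin ((real k + 1) * arccos s)) + (2 * r) * sin ((real k + 1) * arccos s)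
      + (-1) * sin (real k * arccos s)) r (2 * (if k = 0 then pi / 2 else 0) + 2 * r * L1 + (-1) * L0)"
    by (rule PVL_add[OF PVL_add[OF Q1 Q2] Q3])
  have cong: "(s - r) * (2 * sin ((real k + 1) * arccos s)) + (2 * r) * sin ((real k + 1) * arccos s)
      + (-1) * sin (real k * arccos s) = sin ((real k + 2) * arccos s)" if "s \<in> {-1..1}" for s
  proof -
    have "cos (arccos s) = s" using that by simp
    then show ?thesis using sin_rec[of "real k" "arccos s"] by (simp add: algebra_simps)
  qed
  show ?thesis using PVL_cong[OF cong r Q] by simp
qed

lemma PVL_sin:
  assumes r: "\<bar>r\<bar> < 1"
  shows "PVL (\<lambda>s. sin (real k * arccos s)) r (if k = 0 then 0 else - pi * cos (real k * arccos r))"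
proof -
  define L where "L = (\<lambda>k::nat. if k = 0 then 0 else - pi * cos (real k * arccos r))"
  have c: "cos (arccos r) = r" using r by simp
  have "PVL (\<lambda>s. sin (real k * arccos s)) r (L k) \<and> PVL (\<lambda>s. sin ((real k + 1) * arccos s)) r (L (k + 1))"
  proof (induction k)
    case 0
    have "PVL (\<lambda>s. sin (arccos s)) r (- pi * r)" by (rule PVL_sin1[OF r])
    then show ?case using PVL_zero[of r] unfolding L_def using c by simp
  next
    case (Suc k)
    then have P0: "PVL (\<lambda>s. sin (real k * arccos s)) r (L k)"
      and P1: "PVL (\<lambda>s. sin ((real k + 1) * arccos s)) r (L (k + 1))" by auto
    have S: "PVL (\<lambda>s. sin ((real k + 2) * arccos s)) r (2 * (if k = 0 then pi / 2 else 0) + 2 * r * L (k + 1) - L k)"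
      by (rule PVL_step[OF r P0 P1])
    have "2 * (if k = 0 then pi / 2 else 0) + 2 * r * L (k + 1) - L k = L (k + 2)"
    proof (cases "k = 0")
      case True
      have "cos (2 * arccos r) = 2 * r\<^sup>2 - 1" using c by (simp add: cos_double_cos)
      then have L2: "L 2 = - pi * (2 * r\<^sup>2 - 1)" unfolding L_def by simp
      have L1: "L 1 = - pi * r" unfolding L_def using c by simp
      have L0: "L 0 = 0" unfolding L_def by simp
      show ?thesis using L0 L1 L2 True by (simp add: algebra_simps power2_eq_square numeral_2_eq_2)
    next
      case False
      have "cos ((real k + 2) * arccos r) = 2 * r * cos ((real k + 1) * arccos r) - cos (real k * arccos r)"
        using cos_rec[of "real k" "arccos r"] c by simp
      moreover have "L k = - pi * cos (real k * arccos r)" "L (k + 1) = - pi * cos ((real k + 1) * arccos r)"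
        "L (k + 2) = - pi * cos ((real k + 2) * arccos r)" unfolding L_def using False by (simp_all add: add.commute)
      ultimately show ?thesis using False
        by (simp only: if_False) (simp add: algebra_simps)
    qed
    with S have "PVL (\<lambda>s. sin ((real k + 2) * arccos s)) r (L (k + 2))" by simp
    then show ?case using P1 by (simp add: add.commute add.left_commute)
  qed
  then show ?thesis unfolding L_def by simp
qed



lemma neg1_pow_diff: "j \<le> n \<Longrightarrow> even n \<Longrightarrow> (-1::'a::ring_1) ^ (n - j) = (-1) ^ j"
proof -
  assume a: "j \<le> n" "even n"
  then have "even (n - j) \<longleftrightarrow> even j" by auto
  then show ?thesis by (cases "even j") (auto simp: neg_one_even_power neg_one_odd_power)
qed


lemma e1: "complex_of_real (sin t) * (2*\<i>) = cis t + (- cis (-t))"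
    by (simp add: complex_eq_iff)
lemma e2: "(2*\<i>)^(2*p) = (-4::complex)^p"
    by (simp add: power_mult power2_eq_square)

lemma e3: "(cis t + (- cis (-t)))^(2*p) =
     (\<Sum>j=0..2*p. complex_of_real ((-1)^j * real (2*p choose j)) * cis ((2*real j - 2*real p)*t))"
    unfolding binomial_ring atLeast0AtMost
  proof (rule sum.cong[OF refl])
    fix j assume j: "j \<in> {..2*p}"
    have "(- cis (-t)) ^ (2*p - j) = (-1)^(2*p-j) * cis (-t) ^ (2*p - j)"
      by (rule power_minus)
    also have "\<dots> = (-1)^j * cis (real (2*p - j) * (-t))"
      using j by (simp only: neg1_pow_diff[of j "2*p"] Complex.DeMoivre even_mult_iff even_numeral atMost_iff simp_thms)
    finally have a: "(- cis (-t)) ^ (2*p - j) = (-1)^j * cis (real (2*p - j) * (-t))" .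
    have b: "cis t ^ j * cis (real (2*p - j) * (-t)) = cis ((2*real j - 2*real p)*t)"
    proof -
      have rj: "real (2*p - j) = 2*real p - real j" using j by (simp add: of_nat_diff)
      have arg: "real j * t + real (2*p-j) * (-t) = (2*real j - 2*real p)*t" unfolding rj by (simp add: algebra_simps)
      show ?thesis unfolding Complex.DeMoivre cis_mult arg ..
    qed
    show "of_nat (2*p choose j) * cis t ^ j * (- cis (-t)) ^ (2*p - j) =
       complex_of_real ((-1)^j * real (2*p choose j)) * cis ((2*real j - 2*real p)*t)"
      unfolding a b[symmetric] by (simp add: mult_ac)
  qed

lemma sinpow_expand:
  fixes t a :: real and p :: nat
  shows "sin t ^ (2*p) * sin (a*t) = (-1/4)^p *
    (\<Sum>j = 0..2*p. (-1)^j * real (2*p choose j) * sin ((a + 2*real j - 2*real p) * t))"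
proof -
  have "complex_of_real (sin t ^ (2*p) * (-4)^p) = (complex_of_real (sin t) * (2*\<i>))^(2*p)"
    by (simp only: power_mult_distrib[of "complex_of_real (sin t)" "2*\<i>"] e2 of_real_power of_real_mult of_real_minus of_real_numeral)
  also have "\<dots> = (\<Sum>j=0..2*p. complex_of_real ((-1)^j * real (2*p choose j)) * cis ((2*real j - 2*real p)*t))"
    by (simp only: e1 e3)
  finally have s1: "complex_of_real (sin t ^ (2*p) * (-4)^p) = (\<Sum>j=0..2*p. complex_of_real ((-1)^j * real (2*p choose j)) * cis ((2*real j - 2*real p)*t))" .
  have "complex_of_real (sin t ^ (2*p) * (-4)^p) * cis (a*t) =
     (\<Sum>j=0..2*p. complex_of_real ((-1)^j * real (2*p choose j)) * cis ((a + 2*real j - 2*real p)*t))"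
    unfolding s1 sum_distrib_right
  proof (rule sum.cong[OF refl])
    fix j
    have arg: "(2*real j - 2*real p)*t + a*t = (a + 2*real j - 2*real p)*t" by (simp add: algebra_simps)
    show "complex_of_real ((-1)^j * real (2*p choose j)) * cis ((2*real j - 2*real p)*t) * cis (a*t) =
       complex_of_real ((-1)^j * real (2*p choose j)) * cis ((a + 2*real j - 2*real p)*t)"
      by (simp only: mult.assoc cis_mult arg)
  qed
  then have "Im (complex_of_real (sin t ^ (2*p) * (-4)^p) * cis (a*t)) =
     Im (\<Sum>j=0..2*p. complex_of_real ((-1)^j * real (2*p choose j)) * cis ((a + 2*real j - 2*real p)*t))"
    by (rule arg_cong)
  then have s2: "sin t ^ (2*p) * (-4)^p * sin (a*t) =
     (\<Sum>j=0..2*p. (-1)^j * real (2*p choose j) * sin ((a + 2*real j - 2*real p)*t))"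
    by simp
  have q: "(-1/4::real)^p * (-4)^p = 1" by (simp flip: power_mult_distrib)
  have "sin t ^ (2*p) * sin (a*t) = (-1/4)^p * (sin t ^ (2*p) * (-4)^p * sin (a*t))"
    using q by (simp add: mult_ac)
  then show ?thesis unfolding s2 .
qed


lemma DERIV_cos_k_arccos:
  assumes x: "-1 < x" "x < (1::real)"
  shows "((\<lambda>y. cos (k * arccos y)) has_real_derivative k * sin (k * arccos x) / sqrt (1 - x\<^sup>2)) (at x)"
proof -
  have "((\<lambda>y. cos (k * arccos y)) has_real_derivative - sin (k * arccos x) * (k * inverse (- sqrt (1 - x\<^sup>2)))) (at x)"
    by (rule DERIV_chain2[OF DERIV_cos DERIV_cmult[OF DERIV_arccos[OF x]]])
  then show ?thesis by (simp add: field_simps)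
qed

lemma decomp:
  fixes m n :: nat and s :: real
  assumes m: "m \<ge> 2" and n: "n \<ge> 2 * m - 1" and s: "s \<in> {-1..1}"
  shows "chebU n s * (1 - s\<^sup>2) powr (real m - 1/2) =
    (\<Sum>j = 0..2*(m-1). ((-1/4)^(m-1) * ((-1)^j * real (2*(m-1) choose j))) * sin (real (n + 2 + 2*j - 2*m + 1) * arccos s))"
proof -
  define p where "p = m - 1"
  define S where "S = sin (arccos s)"
  have S: "S = sqrt (1 - s\<^sup>2)" unfolding S_def by (rule sin_arccos) (use s in auto)
  have s2: "s\<^sup>2 \<le> 1" using s by (auto simp: abs_square_le_1)
  have S0: "S \<ge> 0" unfolding S using s2 by simp
  have SS: "S\<^sup>2 = 1 - s\<^sup>2" unfolding S using s2 by simp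
  have p1: "p \<ge> 1" unfolding p_def using m by simp
  have L: "chebU n s * (1 - s\<^sup>2) powr (real m - 1/2) = S ^ (2*p) * sin ((real n + 1) * arccos s)"
  proof (cases "S = 0")
    case True
    then have "1 - s\<^sup>2 = 0" using SS by simp
    then show ?thesis using True p1 by simp
  next
    case False
    then have Sp: "S > 0" using S0 by simp
    have pos: "1 - s\<^sup>2 > 0" using SS Sp by (metis zero_less_power2 False)
    have "real m - 1/2 = real p + 1/2" unfolding p_def using m by simp
    then have "(1 - s\<^sup>2) powr (real m - 1/2) = (1 - s\<^sup>2) powr (real p) * (1 - s\<^sup>2) powr (1/2)"
      by (simp add: powr_add)
    also have "\<dots> = (1 - s\<^sup>2) ^ p * S" using pos by (simp add: powr_realpow powr_half_sqrt S)
    also have "\<dots> = S ^ (2*p) * S" unfolding SS[symmetric] by (simp add: power_mult)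
    finally have P: "(1 - s\<^sup>2) powr (real m - 1/2) = S ^ (2*p) * S" .
    have C: "chebU n s = sin ((real n + 1) * arccos s) / S" unfolding chebU_def S_def ..
    show ?thesis unfolding P C using Sp by (simp add: field_simps)
  qed
  have E: "S ^ (2*p) * sin ((real n + 1) * arccos s) = (-1/4)^p *
    (\<Sum>j = 0..2*p. (-1)^j * real (2*p choose j) * sin ((real n + 1 + 2*real j - 2*real p) * arccos s))"
    unfolding S_def by (rule sinpow_expand)
  have K: "real n + 1 + 2*real j - 2*real p = real (n + 2 + 2*j - 2*m + 1)" for j
  proof -
    have "2*m \<le> n + 2 + 2*j" using n m by linarith
    then show ?thesis unfolding p_def using m by (simp add: of_nat_diff)
  qed
  show ?thesis unfolding L E p_def[symmetric] K sum_distrib_left by (simp add: mult.assoc)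
qed



theorem mainTheorem4:
  fixes m n :: nat and r :: real
  assumes "m \<ge> 2" and "n \<ge> 2 * m - 1" and "\<bar>r\<bar> < 1"
  shows "hadamard2 (\<lambda>s. chebU n s * (1 - s\<^sup>2) powr (real m - 1/2)) r
       = pi * (-1) ^ m * (1/2) ^ (2 * m - 2) *
         (\<Sum>j = 0..2 * m - 2. (-1) ^ j * real ((2 * m - 2) choose j)
             * (real n + 3 - 2 * real m + 2 * real j) * chebU (n + 2 + 2 * j - 2 * m) r)"
proof -
  define D where "D = (\<lambda>s. chebU n s * (1 - s\<^sup>2) powr (real m - 1/2))"
  define p where "p = m - 1"
  define c where "c = (\<lambda>j. (-1/4::real)^p * ((-1)^j * real (2*p choose j)))"
  define k where "k = (\<lambda>j. n + 2 + 2*j - 2*m + 1)"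
  define \<Phi> where "\<Phi> = (\<lambda>x. \<Sum>j = 0..2*p. c j * (- pi * cos (real (k j) * arccos x)))"
  have m: "m \<ge> 2" and n: "n \<ge> 2 * m - 1" using assms by auto
  have dec: "(\<Sum>j = 0..2*p. c j * sin (real (k j) * arccos s)) = D s" if "s \<in> {-1..1}" for s
    unfolding D_def c_def k_def p_def using decomp[OF m n that] by simp
  have cpvD: "cpv D x = \<Phi> x" if x: "\<bar>x\<bar> < 1" for x
  proof -
    have "PVL (\<lambda>s. \<Sum>j = 0..2*p. c j * sin (real (k j) * arccos s)) x (\<Phi> x)"
      unfolding \<Phi>_def
    proof (rule PVL_sum)
      fix j assume "j \<in> {0..2*p}"
      have "k j \<noteq> 0" unfolding k_def by simp
      then have "PVL (\<lambda>s. sin (real (k j) * arccos s)) x (- pi * cos (real (k j) * arccos x))"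
        using PVL_sin[OF x, of "k j"] by simp
      then show "PVL (\<lambda>s. c j * sin (real (k j) * arccos s)) x (c j * (- pi * cos (real (k j) * arccos x)))"
        by (rule PVL_cmult)
    qed simp
    then have P: "PVL (\<lambda>s. \<Sum>j = 0..2*p. c j * sin (real (k j) * arccos s)) x (\<Phi> x)" .
    have "PVL D x (\<Phi> x)"
      by (rule PVL_cong[where f="\<lambda>s. \<Sum>j = 0..2*p. c j * sin (real (k j) * arccos s)" and g=D]) (use dec x P in auto)
    then show ?thesis by (rule PVL_cpv)
  qed
  have r: "-1 < r" "r < 1" using assms(3) by auto
  define w where "w = sqrt (1 - r\<^sup>2)"
  have dPhi: "(\<Phi> has_real_derivative (\<Sum>j = 0..2*p. c j * (- pi * (real (k j) * sin (real (k j) * arccos r) / w)))) (at r)"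
    unfolding \<Phi>_def w_def
    by (intro DERIV_sum DERIV_cmult DERIV_cos_k_arccos r)
  have dD: "(cpv D has_real_derivative (\<Sum>j = 0..2*p. c j * (- pi * (real (k j) * sin (real (k j) * arccos r) / w)))) (at r)"
    by (rule has_field_derivative_transform_within_open[OF dPhi, of "{-1<..<1}"]) (use r cpvD in auto)
  have H: "hadamard2 D r = (\<Sum>j = 0..2*p. c j * (- pi * (real (k j) * sin (real (k j) * arccos r) / w)))"
    unfolding hadamard2_def by (rule DERIV_imp_deriv[OF dD])
  have w: "sin (arccos r) = w" unfolding w_def by (rule sin_arccos) (use r in auto)
  have mp: "2 * m - 2 = 2 * p" unfolding p_def by simp
  have coef: "(-1/4::real)^p * (- pi) = pi * (-1) ^ m * (1/2) ^ (2 * p)"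
  proof -
    have "m = p + 1" unfolding p_def using m by simp
    then show ?thesis by (simp add: power_mult power_mult_distrib[symmetric] power2_eq_square)
  qed
  have trm: "c j * (- pi * (real (k j) * sin (real (k j) * arccos r) / w)) =
     pi * (-1) ^ m * (1/2) ^ (2 * m - 2) * ((-1) ^ j * real ((2 * m - 2) choose j)
             * (real n + 3 - 2 * real m + 2 * real j) * chebU (n + 2 + 2 * j - 2 * m) r)" for j
  proof -
    have K: "real (k j) = real n + 3 - 2 * real m + 2 * real j"
    proof -
      have "2*m \<le> n + 2 + 2*j" using n m by linarith
      then show ?thesis unfolding k_def by (simp add: of_nat_diff)
    qed
    have U: "chebU (n + 2 + 2 * j - 2 * m) r = sin (real (k j) * arccos r) / w"
      unfolding chebU_def w k_def by (simp add: add.commute)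
    have "c j * (- pi * (real (k j) * sin (real (k j) * arccos r) / w)) =
      ((-1/4::real)^p * (- pi)) * ((-1)^j * real (2*p choose j) * real (k j) * (sin (real (k j) * arccos r) / w))"
      unfolding c_def by (simp add: mult_ac)
    then show ?thesis unfolding U[symmetric] coef mp K[symmetric] by (simp add: mult_ac)
  qed
  show ?thesis unfolding D_def[symmetric] H mp[symmetric] sum_distrib_left
    by (rule sum.cong[OF refl]) (use trm mp in simp)
qed


end
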